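(* Let $d$ be a translation-invariant distance on $\mathbb R^2$ (i.e. $d(p+q,p+q')=d(q,q')$ for all $p,q,q'$) which induces the Euclidean topology, and let $d_E$ be the Euclidean distance. Then there exist a neighborhood $U$ of $0$ and a constant $C>0$ such that $d_E(p,0)\le C\, d(p,0)$ for all $p\in U$. *)

theory Defs
  imports "HOL-Analysis.Analysis"
begin

definition is_distance :: "('a \<Rightarrow> 'a \<Rightarrow> real) \<Rightarrow> bool" where
  "is_distance d \<longleftrightarrow>
     (\<forall>x y. d x y \<ge> 0) \<and> (\<forall>x y. d x y = 0 \<longleftrightarrow> x = y) \<and>
     (\<forall>x y. d x y = d y x) \<and> (\<forall>x y z. d x z \<le> d x y + d y z)"

definition d_open :: "('a \<Rightarrow> 'a \<Rightarrow> real) \<Rightarrow> 'a set \<Rightarrow> bool" where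
  "d_open d S \<longleftrightarrow> (\<forall>x\<in>S. \<exists>e>0. \<forall>y. d x y < e \<longrightarrow> y \<in> S)"

definition induces_euclidean_topology :: "('a::topological_space \<Rightarrow> 'a \<Rightarrow> real) \<Rightarrow> bool" where
  "induces_euclidean_topology d \<longleftrightarrow> (\<forall>S. d_open d S \<longleftrightarrow> open S)"

end

theory Submission
  imports Defs
begin

lemma mult_bound:
  fixes d :: "real^2 \<Rightarrow> real^2 \<Rightarrow> real"
  assumes "is_distance d"
    and tr: "\<And>p q q'. d (p + q) (p + q') = d q q'"
  shows "d 0 (real n *\<^sub>R p) \<le> real n * d 0 p"
proof (induction n)
  case 0
  have "d 0 0 = 0" using assms(1) unfolding is_distance_def by blast
  then show ?case by simp
next
  case (Suc n)
  have tri: "d 0 (real (Suc n) *\<^sub>R p) \<le> d 0 (real n *\<^sub>R p) + d (real n *\<^sub>R p) (real (Suc n) *\<^sub>R p)"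
    using assms(1) unfolding is_distance_def by blast
  have "d (real n *\<^sub>R p) (real (Suc n) *\<^sub>R p) = d (real n *\<^sub>R p + 0) (real n *\<^sub>R p + p)"
    by (simp add: algebra_simps)
  also have "\<dots> = d 0 p" by (rule tr)
  finally show ?case using tri Suc by (simp add: algebra_simps)
qed

theorem mainTheorem9:
  fixes d :: "real^2 \<Rightarrow> real^2 \<Rightarrow> real"
  assumes "is_distance d"
    and "\<And>p q q'. d (p + q) (p + q') = d q q'"
    and "induces_euclidean_topology d"
  shows "\<exists>U C. open U \<and> 0 \<in> U \<and> C > 0 \<and> (\<forall>p\<in>U. dist p 0 \<le> C * d p 0)"
proof -
  have "d_open d (ball 0 1)" using assms(3) unfolding induces_euclidean_topology_def by simp
  then obtain e where e: "e > 0" "\<And>y. d 0 y < e \<Longrightarrow> y \<in> ball (0::real^2) 1"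
    unfolding d_open_def by force
  have sym: "\<And>x y. d x y = d y x" and nn: "\<And>x y. d x y \<ge> 0"
    using assms(1) unfolding is_distance_def by auto
  have "\<forall>p\<in>ball 0 1. dist p 0 \<le> (2/e) * d p 0"
  proof
    fix p :: "real^2" assume p: "p \<in> ball 0 1"
    show "dist p 0 \<le> (2/e) * d p 0"
    proof (cases "p = 0")
      case True
      have "d 0 0 = 0" using assms(1) unfolding is_distance_def by blast
      then show ?thesis using True by simp
    next
      case False
      define r where "r = norm p"
      have r: "0 < r" "r < 1" using p False by (auto simp: r_def)
      define n where "n = nat (ceiling (1/r))"
      have n1: "1/r \<le> real n" unfolding n_def by linarith
      have "1/r > 0" using r by simp
      hence n2: "real n < 1/r + 1" unfolding n_def by (simp add: of_nat_nat ceiling_correct) linarith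
      have "1 \<le> real n * r" using n1 r by (simp add: field_simps)
      hence "norm (real n *\<^sub>R p) \<ge> 1" by (simp add: r_def)
      hence "d 0 (real n *\<^sub>R p) \<ge> e" using e(2)[of "real n *\<^sub>R p"] by force
      hence ge: "e \<le> real n * d 0 p" using mult_bound[OF assms(1,2), of n p] by linarith
      have "real n * r < 1 + r" using n2 r by (simp add: field_simps)
      hence nr: "real n * r \<le> 2" using r by linarith
      have "e * r \<le> real n * d 0 p * r" using ge r by (simp add: mult_right_mono)
      also have "\<dots> = (real n * r) * d 0 p" by simp
      also have "\<dots> \<le> 2 * d 0 p" using nr nn[of 0 p] by (simp add: mult_right_mono)
      finally have "e * r \<le> 2 * d 0 p" .
      hence "r \<le> (2/e) * d 0 p" using e(1) by (simp add: field_simps)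
      then show ?thesis by (simp add: r_def dist_norm sym[of p 0])
    qed
  qed
  then show ?thesis using e(1) by (intro exI[of _ "ball 0 1"] exI[of _ "2/e"]) auto
qed

end
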